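(* Let $k\ge 1$, let $\mu_{\text{ns}}\in\mathbb{R}^{d_{\text{ns}}}$, $\Sigma_{\text{ns}}\in\mathbb{S}^{d_{\text{ns}}}_{++}$, and for each $i\in[k]$ let $\mu_i\in\mathbb{R}^{d_{\text{sp}}}$, $\Sigma_i\in\mathbb{S}^{d_{\text{sp}}}_{++}$. In environment $e_i$, data is generated as follows: $y=1$ with probability $\eta$ and $y=-1$ otherwise; conditionally on $Y=y$, ${\mathbf x}_{\text{ns}}\sim\mathcal{N}(y\mu_{\text{ns}},\Sigma_{\text{ns}})$ and ${\mathbf x}_{\text{sp}}\sim\mathcal{N}(y\mu_i,\Sigma_i)$, drawn independently; and ${\mathbf x}=[{\mathbf x}_{\text{ns}},{\mathbf x}_{\text{sp}}]$. Let $\sigma:\mathbb{R}\to(0,1)$ be an invertible function and consider the classifier $f({\mathbf x};{\mathbf w},b)=\sigma({\mathbf w}^\top{\mathbf x}-b)$ with ${\mathbf w}=[{\mathbf w}_{\text{ns}},{\mathbf w}_{\text{sp}}]$ decomposed into coefficients of the invariant and spurious features. If $f$ is calibrated on all $k$ environments, then either ${\mathbf w}=\mathbf{0}$ or there exists $t\neq 0$ such that $$\frac{{\mathbf w}_{\text{ns}}^\top\mu_{\text{ns}}+{\mathbf w}_{\text{sp}}^\top\mu_i}{{\mathbf w}_{\text{ns}}^\top\Sigma_{\text{ns}}{\mathbf w}_{\text{ns}}+{\mathbf w}_{\text{sp}}^\top\Sigma_i{\mathbf w}_{\text{sp}}}=t\quad\text{for all } i\in[k].$$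
   Context: $\mathbb{S}^d_{++}$ denotes the set of $d\times d$ symmetric positive definite matrices, and $[k]=\{1,\dots,k\}$. A classifier $f$ with values in $(0,1)$ is calibrated on the environments $e_1,\dots,e_k$ if for each $i\in[k]$ and every $\alpha$ in the range of $f$ restricted to $e_i$, $P[Y=1\mid f(X)=\alpha, E=e_i]=\alpha$. *)

theory Defs
  imports "HOL-Probability.Probability"
begin

definition sym_pos_def :: "real^'n^'n \<Rightarrow> bool" where
  "sym_pos_def A \<longleftrightarrow> transpose A = A \<and> (\<forall>x. x \<noteq> 0 \<longrightarrow> x \<bullet> (A *v x) > 0)"

definition gauss_density :: "real^'n \<Rightarrow> real^'n^'n \<Rightarrow> real^'n \<Rightarrow> real" where
  "gauss_density mu Sig x =
     exp (- ((x - mu) \<bullet> (matrix_inv Sig *v (x - mu))) / 2)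
       / sqrt ((2 * pi) ^ CARD('n) * det Sig)"

definition env_measure ::
  "real \<Rightarrow> (real^'a) \<Rightarrow> (real^'a^'a) \<Rightarrow> (real^'b) \<Rightarrow> (real^'b^'b)
     \<Rightarrow> (real \<times> ((real^'a) \<times> (real^'b))) measure" where
  "env_measure eta mu_ns Sig_ns mu_sp Sig_sp =
     density (count_space {-1, 1} \<Otimes>\<^sub>M (lborel \<Otimes>\<^sub>M lborel))
       (\<lambda>(y, (xns, xsp)). ennreal ((if y = 1 then eta else 1 - eta)
            * gauss_density (y *\<^sub>R mu_ns) Sig_ns xns
            * gauss_density (y *\<^sub>R mu_sp) Sig_sp xsp))"

text \<open>A score function f (values in (0,1)) is calibrated w.r.t. the data law M if
  P[Y = 1 | f] = f almost surely, i.e. the conditional expectation of the indicator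
  of Y = 1 given the sigma-algebra generated by f equals f a.s.\<close>
definition calibrated :: "'x measure \<Rightarrow> ('x \<Rightarrow> real) \<Rightarrow> ('x \<Rightarrow> real) \<Rightarrow> bool" where
  "calibrated M Y f \<longleftrightarrow>
     (AE z in M. real_cond_exp M (vimage_algebra (space M) f borel) Y z = f z)"

end

theory Submission
  imports Defs
begin
lemma sym_pos_sym:
  assumes "sym_pos_def S"
  shows "(S *v x) \<bullet> y = x \<bullet> (S *v y)"
proof -
  have "transpose S = S" using assms by (simp add: sym_pos_def_def)
  have "(S *v x) \<bullet> y = (x v* transpose S) \<bullet> y" by simp
  also have "\<dots> = x \<bullet> (transpose S *v y)" by (rule dot_lmul_matrix)
  finally show ?thesis using \<open>transpose S = S\<close> by simp
qed

lemma sym_pos_invertible: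
  assumes "sym_pos_def S"
  shows "invertible S"
proof -
  have "\<forall>x. S *v x = 0 \<longrightarrow> x = 0"
  proof (intro allI impI)
    fix x assume "S *v x = 0"
    then have "x \<bullet> (S *v x) = 0" by simp
    then show "x = 0" using assms unfolding sym_pos_def_def by force
  qed
  then obtain B where "B ** S = mat 1" using matrix_left_invertible_ker by blast
  then show ?thesis using invertible_left_inverse by blast
qed

lemma sym_pos_inv:
  assumes "sym_pos_def S"
  shows "S *v (matrix_inv S *v y) = y" "matrix_inv S *v (S *v y) = y"
proof -
  have "S ** matrix_inv S = mat 1 \<and> matrix_inv S ** S = mat 1"
    using sym_pos_invertible[OF assms] unfolding invertible_def matrix_inv_def
    by (rule someI_ex)
  then show "S *v (matrix_inv S *v y) = y" "matrix_inv S *v (S *v y) = y"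
    by (simp_all add: matrix_vector_mul_assoc)
qed

lemma sym_pos_nonneg:
  assumes "sym_pos_def S"
  shows "x \<bullet> (S *v x) \<ge> 0"
  using assms unfolding sym_pos_def_def by (cases "x = 0") (auto intro: less_imp_le)

lemma det_continuous_path:
  fixes A B :: "real^'n^'n"
  shows "continuous_on UNIV (\<lambda>s::real. det ((1 - s) *\<^sub>R A + s *\<^sub>R B))"
  unfolding det_def
  by (intro continuous_intros)

lemma sym_pos_det_pos:
  fixes S :: "real^'n^'n"
  assumes "sym_pos_def S"
  shows "det S > 0"
proof (rule ccontr)
  assume "\<not> det S > 0"
  then have le: "det S \<le> 0" by simp
  let ?f = "\<lambda>s::real. det ((1 - s) *\<^sub>R mat 1 + s *\<^sub>R S)"
  have "?f 0 = 1" by simp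
  have "?f 1 = det S" by simp
  have cont: "\<forall>x. isCont ?f x"
    using det_continuous_path[of "mat 1" S] continuous_on_eq_continuous_at[of UNIV] by auto
  obtain s where s: "0 \<le> s" "s \<le> 1" "?f s = 0"
    using IVT2[of "?f" 1 0 0] le \<open>?f 0 = 1\<close> \<open>?f 1 = det S\<close> cont by auto
  have "sym_pos_def ((1 - s) *\<^sub>R mat 1 + s *\<^sub>R S)"
    unfolding sym_pos_def_def
  proof (intro conjI allI impI)
    show "transpose ((1 - s) *\<^sub>R mat 1 + s *\<^sub>R S) = (1 - s) *\<^sub>R mat 1 + s *\<^sub>R S"
      using assms unfolding sym_pos_def_def
      by (simp add: transpose_def vec_eq_iff mat_def)
    fix x :: "real^'n" assume "x \<noteq> 0"
    have eq: "x \<bullet> (((1 - s) *\<^sub>R mat 1 + s *\<^sub>R S) *v x) = (1 - s) * (x \<bullet> x) + s * (x \<bullet> (S *v x))"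
      by (simp add: matrix_vector_mult_add_rdistrib scaleR_matrix_vector_assoc[symmetric] inner_add_right)
    have "x \<bullet> x > 0" using \<open>x \<noteq> 0\<close> by simp
    moreover have "x \<bullet> (S *v x) > 0" using assms \<open>x \<noteq> 0\<close> unfolding sym_pos_def_def by blast
    ultimately show "x \<bullet> (((1 - s) *\<^sub>R mat 1 + s *\<^sub>R S) *v x) > 0"
    proof (cases "s = 0")
      case True then show ?thesis unfolding eq using \<open>x \<bullet> x > 0\<close> by simp
    next
      case False
      then have "s * (x \<bullet> (S *v x)) > 0" using s \<open>x \<bullet> (S *v x) > 0\<close> by simp
      moreover have "(1 - s) * (x \<bullet> x) \<ge> 0" using s by simp
      ultimately show ?thesis unfolding eq by linarith
    qed
  qed
  then have "det ((1 - s) *\<^sub>R mat 1 + s *\<^sub>R S) \<noteq> 0"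
    using sym_pos_invertible invertible_det_nz by blast
  then show False using s by simp
qed

lemma nn_integral_exp_sq_1d:
  assumes "c > 0"
  shows "(\<integral>\<^sup>+t. ennreal (exp (- c * t^2)) \<partial>lborel) < \<infinity>"
proof -
  define s where "s = sqrt (1 / (2 * c))"
  have s2: "2 * s^2 = 1 / c" using assms by (simp add: s_def)
  have s0: "s > 0" using assms by (simp add: s_def)
  have eq: "exp (- c * t^2) = sqrt (2 * pi * s^2) * normal_density 0 s t" for t
    using s0 s2 assms by (simp add: normal_density_def field_simps)
  have ae: "AE t in lborel. 0 \<le> normal_density 0 s t" by simp
  have "(\<integral>\<^sup>+t. ennreal (normal_density 0 s t) \<partial>lborel) = ennreal 1"
    using nn_integral_eq_integral[OF integrable_normal_density[of s 0, OF s0] ae] s0 by simp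
  then have "(\<integral>\<^sup>+t. ennreal (exp (- c * t^2)) \<partial>lborel) = ennreal (sqrt (2 * pi * s^2))"
    unfolding eq by (simp add: ennreal_mult nn_integral_cmult)
  then show ?thesis by simp
qed

lemma norm_sum_Basis_sq: "(norm (\<Sum>b\<in>Basis. f b *\<^sub>R b :: 'a::euclidean_space))^2 = (\<Sum>b\<in>Basis. (f b)^2)" 
proof -
  have "(norm (\<Sum>b\<in>Basis. f b *\<^sub>R b :: 'a))^2 = (\<Sum>b'\<in>Basis. ((\<Sum>b\<in>Basis. f b *\<^sub>R b) \<bullet> b')^2)"
    unfolding power2_norm_eq_inner by (subst euclidean_inner) (simp add: power2_eq_square)
  also have "\<dots> = (\<Sum>b\<in>Basis. (f b)^2)"
    by (simp add: inner_sum_left inner_Basis if_distrib cong: if_cong)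
  finally show ?thesis .
qed

lemma nn_integral_exp_sq:
  assumes "c > 0"
  shows "(\<integral>\<^sup>+x. ennreal (exp (- c * (norm (x::'a::euclidean_space))^2)) \<partial>lborel) < \<infinity>"
proof -
  interpret P: product_sigma_finite "\<lambda>_::'a. lborel :: real measure" by standard
  have "(\<integral>\<^sup>+x. ennreal (exp (- c * (norm (x::'a))^2)) \<partial>lborel)
      = (\<integral>\<^sup>+f. ennreal (exp (- c * (norm (\<Sum>b\<in>Basis. f b *\<^sub>R b :: 'a))^2)) \<partial>(\<Pi>\<^sub>M b\<in>Basis. lborel))"
    by (subst lborel_eq) (simp add: nn_integral_distr)
  also have "\<dots> = (\<integral>\<^sup>+f. (\<Prod>b\<in>(Basis::'a set). ennreal (exp (- c * (f b)^2))) \<partial>(\<Pi>\<^sub>M b\<in>(Basis::'a set). lborel))"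
    by (simp add: norm_sum_Basis_sq sum_distrib_left exp_sum prod_ennreal)
  also have "\<dots> = (\<Prod>b\<in>(Basis::'a set). (\<integral>\<^sup>+t. ennreal (exp (- c * t^2)) \<partial>lborel))"
    by (rule P.product_nn_integral_prod) auto
  also have "\<dots> < \<infinity>"
    using nn_integral_exp_sq_1d[OF assms] by (simp add: power_less_top_ennreal)
  finally show ?thesis .
qed

lemma nn_integral_translate:
  fixes d :: "'a::euclidean_space"
  assumes [measurable]: "h \<in> borel_measurable borel"
  shows "(\<integral>\<^sup>+x. h (x + d) \<partial>lborel) = (\<integral>\<^sup>+x. h x \<partial>lborel)"
proof -
  have "(\<integral>\<^sup>+x. h x \<partial>lborel) = (\<integral>\<^sup>+x. h x \<partial>(distr lborel borel ((+) d)))"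
    by (simp add: lborel_distr_plus)
  also have "\<dots> = (\<integral>\<^sup>+x. h (d + x) \<partial>lborel)"
    by (simp add: nn_integral_distr)
  finally show ?thesis by (simp add: add.commute)
qed

lemma quad_pos:
  assumes "sym_pos_def S" "y \<noteq> 0"
  shows "y \<bullet> (matrix_inv S *v y) > 0"
proof -
  define z where "z = matrix_inv S *v y"
  have y: "y = S *v z" using sym_pos_inv(1)[OF assms(1)] by (simp add: z_def)
  have "z \<noteq> 0" using y assms(2) by auto
  then have "z \<bullet> (S *v z) > 0" using assms(1) unfolding sym_pos_def_def by blast
  then show ?thesis unfolding z_def[symmetric] using y by (simp add: inner_commute)
qed

lemma quad_lower:
  fixes S :: "real^'n^'n"
  assumes "sym_pos_def S"
  shows "\<exists>c>0. \<forall>y. c * (norm y)^2 \<le> y \<bullet> (matrix_inv S *v y)"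
proof -
  let ?q = "\<lambda>y::real^'n. y \<bullet> (matrix_inv S *v y)"
  have cont: "continuous_on (sphere 0 1) ?q"
    by (intro continuous_intros)
  have ne: "sphere (0::real^'n) 1 \<noteq> {}"
  proof -
    obtain b where b: "b \<in> (Basis::(real^'n) set)" using nonempty_Basis by blast
    have "norm b = 1" using b by (simp add: norm_Basis)
    then show ?thesis by (auto simp: sphere_def)
  qed
  obtain y0 where y0: "y0 \<in> sphere 0 1" "\<forall>y\<in>sphere 0 1. ?q y0 \<le> ?q y"
    using continuous_attains_inf[OF compact_sphere ne cont] by blast
  have y0nz: "y0 \<noteq> 0" using y0(1) by auto
  have c: "?q y0 > 0" using quad_pos[OF assms y0nz] .
  have "\<forall>y. ?q y0 * (norm y)^2 \<le> ?q y"
  proof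
    fix y :: "real^'n"
    show "?q y0 * (norm y)^2 \<le> ?q y"
    proof (cases "y = 0")
      case True then show ?thesis by simp
    next
      case False
      define u where "u = (1 / norm y) *\<^sub>R y"
      have u: "u \<in> sphere 0 1" using False by (simp add: u_def)
      have yu: "y = norm y *\<^sub>R u" using False by (simp add: u_def)
      have "?q y = (norm y)^2 * ?q u"
        by (subst yu, subst yu) (simp add: matrix_vector_mult_scaleR power2_eq_square)
      moreover have "?q y0 \<le> ?q u" using y0(2) u by blast
      ultimately show ?thesis by (metis mult.commute mult_right_mono zero_le_power2)
    qed
  qed
  then show ?thesis using c by blast
qed

lemma gauss_pos:
  fixes S :: "real^'n^'n"
  assumes "sym_pos_def S"
  shows "gauss_density mu S x > 0"
  using sym_pos_det_pos[OF assms] unfolding gauss_density_def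
  by (intro divide_pos_pos) auto

lemma gauss_cont: "continuous_on UNIV (gauss_density mu S)"
proof -
  have c: "continuous_on UNIV (\<lambda>x. matrix_inv S *v (x - mu))"
    by (rule continuous_on_compose2[OF matrix_vector_mult_linear_continuous_on]) (auto intro!: continuous_intros)
  show ?thesis
    unfolding gauss_density_def divide_inverse by (intro continuous_intros c)
qed

lemma gauss_meas[measurable]: "gauss_density mu S \<in> borel_measurable borel"
  by (rule borel_measurable_continuous_onI[OF gauss_cont])

lemma gauss_finite:
  fixes S :: "real^'n^'n"
  assumes "sym_pos_def S"
  shows "(\<integral>\<^sup>+x. ennreal (gauss_density mu S x) \<partial>lborel) < \<infinity>"
proof -
  obtain c where c: "c > 0" "\<forall>y. c * (norm y)^2 \<le> y \<bullet> (matrix_inv S *v y)"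
    using quad_lower[OF assms] by blast
  define N where "N = sqrt ((2 * pi) ^ CARD('n) * det S)"
  have N: "N > 0" using sym_pos_det_pos[OF assms] by (simp add: N_def)
  have le: "gauss_density mu S x \<le> (1 / N) * exp (- (c/2) * (norm (x - mu))^2)" for x
  proof -
    have "exp (- ((x - mu) \<bullet> (matrix_inv S *v (x - mu))) / 2) \<le> exp (- (c/2) * (norm (x - mu))^2)"
      using c(2)[rule_format, of "x - mu"] by simp
    then show ?thesis unfolding gauss_density_def N_def[symmetric] using N
      by (simp add: divide_right_mono)
  qed
  have "(\<integral>\<^sup>+x. ennreal (gauss_density mu S x) \<partial>lborel)
      \<le> (\<integral>\<^sup>+x. ennreal (1 / N) * ennreal (exp (- (c/2) * (norm (x - mu))^2)) \<partial>lborel)"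
    using le N by (intro nn_integral_mono) (simp add: ennreal_mult[symmetric])
  also have "\<dots> = ennreal (1 / N) * (\<integral>\<^sup>+x. ennreal (exp (- (c/2) * (norm (x - mu))^2)) \<partial>lborel)"
    by (simp add: nn_integral_cmult)
  also have "(\<integral>\<^sup>+x. ennreal (exp (- (c/2) * (norm (x - mu))^2)) \<partial>lborel)
      = (\<integral>\<^sup>+x. ennreal (exp (- (c/2) * (norm (x::real^'n))^2)) \<partial>lborel)"
    using nn_integral_translate[of "\<lambda>x. ennreal (exp (- (c/2) * (norm x)^2))" "- mu"] by simp
  also have "ennreal (1 / N) * \<dots> < \<infinity>"
    using nn_integral_exp_sq[of "c/2", where 'a="real^'n"] c(1) by (simp add: ennreal_mult_less_top)
  finally show ?thesis .
qed

lemma arith_helper: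
  fixes a b c d t :: real
  shows "- a / 2 = - (a + 4*t*(b - c) + 4*t^2*d)/2 + (2*t*b - 2*t*c + 2*t^2*d)"
  by (simp add: field_simps power2_eq_square)

lemma gauss_shift:
  fixes S :: "real^'n^'n"
  assumes "sym_pos_def S"
  shows "gauss_density mu S x =
    gauss_density (- mu) S (x - (2 *\<^sub>R mu - (2 * t) *\<^sub>R (S *v w)))
    * exp (2 * t * (w \<bullet> x) - 2 * t * (w \<bullet> mu) + 2 * t^2 * (w \<bullet> (S *v w)))"
proof -
  define P where "P = matrix_inv S"
  define y where "y = x - mu"
  define e where "e = t *\<^sub>R (S *v w)"
  have arg: "x - (2 *\<^sub>R mu - (2 * t) *\<^sub>R (S *v w)) - - mu = y + 2 *\<^sub>R e"
    by (simp add: y_def e_def algebra_simps scaleR_2)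
  have Pe: "P *v e = t *\<^sub>R w"
    using sym_pos_inv(2)[OF assms, of w] by (simp add: P_def e_def matrix_vector_mult_scaleR)
  have ePy: "e \<bullet> (P *v y) = t * (w \<bullet> y)"
    using sym_pos_sym[OF assms, of w "P *v y"] sym_pos_inv(1)[OF assms, of y]
    by (simp add: e_def P_def)
  have ew: "e \<bullet> w = t * (w \<bullet> (S *v w))"
    by (simp add: e_def inner_commute)
  have q: "(y + 2 *\<^sub>R e) \<bullet> (P *v (y + 2 *\<^sub>R e))
      = y \<bullet> (P *v y) + 4 * t * (w \<bullet> y) + 4 * t^2 * (w \<bullet> (S *v w))"
  proof -
    have Pv: "P *v (y + 2 *\<^sub>R e) = P *v y + (2*t) *\<^sub>R w"
      by (simp only: matrix_vector_right_distrib matrix_vector_mult_scaleR Pe scaleR_scaleR)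
    have "(y + 2 *\<^sub>R e) \<bullet> (P *v (y + 2 *\<^sub>R e))
       = y \<bullet> (P *v y) + (2*t) * (y \<bullet> w) + 2 * (e \<bullet> (P *v y)) + 2 * (2*t) * (e \<bullet> w)"
      unfolding Pv by (simp only: inner_add_left inner_add_right inner_scaleR_left inner_scaleR_right) (simp add: algebra_simps)
    also have "\<dots> = y \<bullet> (P *v y) + (2*t) * (w \<bullet> y) + 2 * (t * (w \<bullet> y)) + 2 * (2*t) * (t * (w \<bullet> (S *v w)))"
      by (simp only: ePy ew inner_commute[of y w])
    also have "\<dots> = y \<bullet> (P *v y) + 4 * t * (w \<bullet> y) + 4 * t^2 * (w \<bullet> (S *v w))"
      by (simp add: power2_eq_square)
    finally show ?thesis .
  qed
  have wy: "w \<bullet> y = w \<bullet> x - w \<bullet> mu" by (simp add: y_def inner_diff_right)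
  have key: "exp (- (y \<bullet> (P *v y)) / 2) = exp (- (y \<bullet> (P *v y) + 4 * t * (w \<bullet> y) + 4 * t^2 * (w \<bullet> (S *v w))) / 2)
     * exp (2 * t * (w \<bullet> x) - 2 * t * (w \<bullet> mu) + 2 * t^2 * (w \<bullet> (S *v w)))"
  proof -
    have "- (y \<bullet> (P *v y)) / 2 = - (y \<bullet> (P *v y) + 4 * t * (w \<bullet> y) + 4 * t^2 * (w \<bullet> (S *v w))) / 2
     + (2 * t * (w \<bullet> x) - 2 * t * (w \<bullet> mu) + 2 * t^2 * (w \<bullet> (S *v w)))"
      unfolding wy by (rule arith_helper)
    then show ?thesis by (simp add: exp_add[symmetric])
  qed
  define N where "N = sqrt ((2 * pi) ^ CARD('n) * det S)"
  have g1: "gauss_density mu S x = exp (- (y \<bullet> (P *v y)) / 2) / N"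
    by (simp add: gauss_density_def P_def y_def N_def)
  have g2: "gauss_density (- mu) S (x - (2 *\<^sub>R mu - (2 * t) *\<^sub>R (S *v w)))
     = exp (- (y \<bullet> (P *v y) + 4 * t * (w \<bullet> y) + 4 * t^2 * (w \<bullet> (S *v w))) / 2) / N"
    unfolding gauss_density_def arg P_def[symmetric] N_def[symmetric] q by (rule refl)
  show ?thesis unfolding g1 g2 key by (rule times_divide_eq_left[symmetric, THEN trans], simp only: mult.commute)
qed

definition phi :: "real \<Rightarrow> real^'a \<Rightarrow> real^'a^'a \<Rightarrow> real^'b \<Rightarrow> real^'b^'b \<Rightarrow> ((real^'a) \<times> (real^'b)) \<Rightarrow> real" where
  "phi y mns Sns msp Ssp x = gauss_density (y *\<^sub>R mns) Sns (fst x) * gauss_density (y *\<^sub>R msp) Ssp (snd x)"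

lemma phi_cont: "continuous_on UNIV (phi y mns Sns msp Ssp)"
proof -
  have 1: "continuous_on UNIV (\<lambda>x::((real^'a) \<times> (real^'b)). gauss_density (y *\<^sub>R mns) Sns (fst x))"
    by (rule continuous_on_compose2[OF gauss_cont continuous_on_fst]) (auto intro: continuous_on_id)
  have 2: "continuous_on UNIV (\<lambda>x::((real^'a) \<times> (real^'b)). gauss_density (y *\<^sub>R msp) Ssp (snd x))"
    by (rule continuous_on_compose2[OF gauss_cont continuous_on_snd]) (auto intro: continuous_on_id)
  show ?thesis unfolding phi_def by (intro continuous_intros 1 2)
qed

lemma phi_meas[measurable]: "phi y mns Sns msp Ssp \<in> borel_measurable borel"
  by (rule borel_measurable_continuous_onI[OF phi_cont])

lemma phi_pos:
  assumes "sym_pos_def Sns" "sym_pos_def Ssp"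
  shows "phi y mns Sns msp Ssp x > 0"
  unfolding phi_def using gauss_pos[OF assms(1)] gauss_pos[OF assms(2)] by simp

lemma phi_finite:
  assumes "sym_pos_def Sns" "sym_pos_def Ssp"
  shows "(\<integral>\<^sup>+x. ennreal (phi y mns Sns msp Ssp x) \<partial>lborel) < \<infinity>"
proof -
  let ?g1 = "gauss_density (y *\<^sub>R mns) Sns" and ?g2 = "gauss_density (y *\<^sub>R msp) Ssp"
  have "(\<integral>\<^sup>+x. ennreal (phi y mns Sns msp Ssp x) \<partial>lborel)
     = (\<integral>\<^sup>+x. ennreal (?g1 (fst x)) * ennreal (?g2 (snd x)) \<partial>(lborel \<Otimes>\<^sub>M lborel))"
    unfolding lborel_prod phi_def
    using gauss_pos[OF assms(1)] gauss_pos[OF assms(2)] by (simp add: ennreal_mult less_imp_le)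
  also have "\<dots> = (\<integral>\<^sup>+a. \<integral>\<^sup>+b. ennreal (?g1 a) * ennreal (?g2 b) \<partial>lborel \<partial>lborel)"
    by (subst lborel.nn_integral_fst[symmetric]) auto
  also have "\<dots> = (\<integral>\<^sup>+a. ennreal (?g1 a) * (\<integral>\<^sup>+b. ennreal (?g2 b) \<partial>lborel) \<partial>lborel)"
    by (simp add: nn_integral_cmult)
  also have "\<dots> = (\<integral>\<^sup>+a. ennreal (?g1 a) \<partial>lborel) * (\<integral>\<^sup>+b. ennreal (?g2 b) \<partial>lborel)"
    by (simp add: nn_integral_multc)
  also have "\<dots> < \<infinity>"
    using gauss_finite[OF assms(1)] gauss_finite[OF assms(2)] by (simp add: ennreal_mult_less_top)
  finally show ?thesis .
qed

lemma meas_count: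
  assumes "\<And>y. y \<in> A \<Longrightarrow> h y \<in> borel_measurable N" "countable A"
  shows "(\<lambda>\<omega>. h (fst \<omega>) (snd \<omega>)) \<in> borel_measurable (count_space A \<Otimes>\<^sub>M N)"
proof (rule measurable_compose_countable'[where I=A and g=fst and f="\<lambda>y \<omega>. h y (snd \<omega>)"])
  fix y assume "y \<in> A"
  then show "(\<lambda>\<omega>. h y (snd \<omega>)) \<in> borel_measurable (count_space A \<Otimes>\<^sub>M N)"
    using assms(1) by measurable
qed (use assms in auto)

lemma env_density_eq:
  "(\<lambda>(y, (xns, xsp)). ennreal ((if y = 1 then eta else 1 - eta)
            * gauss_density (y *\<^sub>R mns) Sns xns
            * gauss_density (y *\<^sub>R msp) Ssp xsp))
   = (\<lambda>\<omega>. ennreal ((if fst \<omega> = 1 then eta else 1 - eta) * phi (fst \<omega>) mns Sns msp Ssp (snd \<omega>)))"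
  by (auto simp: phi_def fun_eq_iff mult.assoc)

lemma env_nn_integral:
  fixes mns :: "real^'a" and msp :: "real^'b"
  assumes "0 \<le> eta" "eta \<le> 1" "sym_pos_def Sns" "sym_pos_def Ssp"
    and G: "G \<in> borel_measurable (count_space {-1, 1} \<Otimes>\<^sub>M (lborel \<Otimes>\<^sub>M lborel))"
  shows "(\<integral>\<^sup>+\<omega>. G \<omega> \<partial>env_measure eta mns Sns msp Ssp)
    = ennreal eta * (\<integral>\<^sup>+x. G (1, x) * ennreal (phi 1 mns Sns msp Ssp x) \<partial>lborel)
    + ennreal (1 - eta) * (\<integral>\<^sup>+x. G (-1, x) * ennreal (phi (-1) mns Sns msp Ssp x) \<partial>lborel)"
proof -
  define D where "D = (\<lambda>\<omega>::real \<times> ((real^'a) \<times> (real^'b)). ennreal ((if fst \<omega> = 1 then eta else 1 - eta) * phi (fst \<omega>) mns Sns msp Ssp (snd \<omega>)))"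
  have Dm: "D \<in> borel_measurable (count_space {-1, 1} \<Otimes>\<^sub>M (lborel \<Otimes>\<^sub>M lborel))"
    unfolding D_def lborel_prod
    by (rule meas_count[where h="\<lambda>y x. ennreal ((if y = 1 then eta else 1 - eta) * phi y mns Sns msp Ssp x)"]) auto
  have G': "G \<in> borel_measurable (count_space {-1, 1} \<Otimes>\<^sub>M lborel)"
    using G unfolding lborel_prod .
  have G1[measurable]: "(\<lambda>x. G (1, x)) \<in> borel_measurable lborel"
    using measurable_Pair2[OF G', of 1] by simp
  have G2[measurable]: "(\<lambda>x. G (-1, x)) \<in> borel_measurable lborel"
    using measurable_Pair2[OF G', of "-1"] by simp
  have "(\<integral>\<^sup>+\<omega>. G \<omega> \<partial>env_measure eta mns Sns msp Ssp)
      = (\<integral>\<^sup>+\<omega>. D \<omega> * G \<omega> \<partial>(count_space {-1, 1} \<Otimes>\<^sub>M (lborel \<Otimes>\<^sub>M lborel)))"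
    unfolding env_measure_def env_density_eq D_def[symmetric]
    by (rule nn_integral_density[OF Dm G])
  also have "\<dots> = (\<integral>\<^sup>+\<omega>. D \<omega> * G \<omega> \<partial>(count_space {-1, 1} \<Otimes>\<^sub>M lborel))"
    unfolding lborel_prod ..
  also have "\<dots> = (\<integral>\<^sup>+y. \<integral>\<^sup>+x. D (y, x) * G (y, x) \<partial>lborel \<partial>count_space {-1, 1})"
    using Dm G' unfolding lborel_prod by (subst lborel.nn_integral_fst[symmetric]) auto
  also have "\<dots> = (\<integral>\<^sup>+x. D (-1, x) * G (-1, x) \<partial>lborel) + (\<integral>\<^sup>+x. D (1, x) * G (1, x) \<partial>lborel)"
    by (simp add: nn_integral_count_space_finite)
  also have "(\<integral>\<^sup>+x. D (1, x) * G (1, x) \<partial>lborel) = ennreal eta * (\<integral>\<^sup>+x. G (1, x) * ennreal (phi 1 mns Sns msp Ssp x) \<partial>lborel)"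
    unfolding D_def using assms(1) phi_pos[OF assms(3,4)]
    by (subst nn_integral_cmult[symmetric]) (auto simp: ennreal_mult less_imp_le ac_simps)
  also have "(\<integral>\<^sup>+x. D (-1, x) * G (-1, x) \<partial>lborel) = ennreal (1 - eta) * (\<integral>\<^sup>+x. G (-1, x) * ennreal (phi (-1) mns Sns msp Ssp x) \<partial>lborel)"
    unfolding D_def using assms(2) phi_pos[OF assms(3,4)]
    by (subst nn_integral_cmult[symmetric]) (auto simp: ennreal_mult less_imp_le ac_simps)
  finally show ?thesis by (simp add: add.commute)
qed

lemma env_finite:
  fixes mns :: "real^'a" and msp :: "real^'b"
  assumes "0 \<le> eta" "eta \<le> 1" "sym_pos_def Sns" "sym_pos_def Ssp"
  shows "finite_measure (env_measure eta mns Sns msp Ssp)"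
proof
  let ?M = "env_measure eta mns Sns msp Ssp"
  have "emeasure ?M (space ?M) = (\<integral>\<^sup>+\<omega>. 1 \<partial>?M)" by simp
  also have "\<dots> = ennreal eta * (\<integral>\<^sup>+x. ennreal (phi 1 mns Sns msp Ssp x) \<partial>lborel)
    + ennreal (1 - eta) * (\<integral>\<^sup>+x. ennreal (phi (-1) mns Sns msp Ssp x) \<partial>lborel)"
    using env_nn_integral[OF assms, of "\<lambda>_. 1"] by simp
  also have "\<dots> < \<infinity>"
    using phi_finite[OF assms(3,4)] by (simp add: ennreal_mult_less_top)
  finally show "emeasure ?M (space ?M) \<noteq> \<infinity>" by simp
qed

lemma sets_env: "sets (env_measure eta mns Sns msp Ssp) = sets (count_space {-1, 1} \<Otimes>\<^sub>M (lborel \<Otimes>\<^sub>M lborel))"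
  unfolding env_measure_def by simp

lemma space_env: "space (env_measure eta mns Sns msp Ssp) = {-1, 1} \<times> UNIV"
  unfolding env_measure_def by (simp add: space_pair_measure)

lemma calib_identity:
  fixes sg :: "real \<Rightarrow> real" and mns :: "real^'a" and msp :: "real^'b" and wns :: "real^'a" and wsp :: "real^'b"
  assumes eta: "0 \<le> eta" "eta \<le> 1" and S: "sym_pos_def Sns" "sym_pos_def Ssp"
    and sig[measurable]: "sg \<in> borel_measurable borel"
    and sig01: "\<And>x. 0 < sg x \<and> sg x < 1"
    and cal: "calibrated (env_measure eta mns Sns msp Ssp)
           (\<lambda>(y, _). if y = 1 then 1 else 0)
           (\<lambda>(_, (xns, xsp)). sg (wns \<bullet> xns + wsp \<bullet> xsp - b))"
    and B[measurable]: "B \<in> sets borel"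
  shows "ennreal eta * (\<integral>\<^sup>+x. ennreal (indicator B (sg ((wns, wsp) \<bullet> x - b)) * (1 - sg ((wns, wsp) \<bullet> x - b)) * phi 1 mns Sns msp Ssp x) \<partial>lborel)
       = ennreal (1 - eta) * (\<integral>\<^sup>+x. ennreal (indicator B (sg ((wns, wsp) \<bullet> x - b)) * sg ((wns, wsp) \<bullet> x - b) * phi (-1) mns Sns msp Ssp x) \<partial>lborel)"
proof -
  let ?M = "env_measure eta mns Sns msp Ssp"
  let ?\<Omega> = "count_space {-1, 1} \<Otimes>\<^sub>M (lborel \<Otimes>\<^sub>M lborel) :: (real \<times> ((real^'a) \<times> (real^'b))) measure"
  define Y where "Y = (\<lambda>(y::real, _::((real^'a) \<times> (real^'b))). if y = 1 then 1 else (0::real))"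
  define f where "f = (\<lambda>(_::real, (xns::real^'a, xsp::real^'b)). sg (wns \<bullet> xns + wsp \<bullet> xsp - b))"
  define z where "z = (\<lambda>x::((real^'a) \<times> (real^'b)). (wns, wsp) \<bullet> x - b)"
  have fz: "f \<omega> = sg (z (snd \<omega>))" for \<omega>
    by (cases \<omega>) (auto simp: f_def z_def)
  have Yf: "Y \<omega> = (if fst \<omega> = 1 then 1 else 0)" for \<omega>
    by (cases \<omega>) (auto simp: Y_def)
  have zm[measurable]: "z \<in> borel_measurable borel" unfolding z_def by measurable
  have fmO: "f \<in> borel_measurable ?\<Omega>"
    unfolding fz[abs_def] lborel_prod by measurable
  have YmO: "Y \<in> borel_measurable ?\<Omega>"
    unfolding Yf[abs_def] by (rule meas_count[where h="\<lambda>y x. if y = 1 then 1 else 0"]) auto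
  have fm[measurable]: "f \<in> borel_measurable ?M"
    using fmO by (simp add: measurable_cong_sets[OF sets_env refl])
  have Ym[measurable]: "Y \<in> borel_measurable ?M"
    using YmO by (simp add: measurable_cong_sets[OF sets_env refl])
  interpret finite_measure ?M using env_finite[OF eta S] .
  define F where "F = vimage_algebra (space ?M) f borel"
  have subalg: "subalgebra ?M F"
    unfolding subalgebra_def F_def
  proof
    show "space (vimage_algebra (space ?M) f borel) = space ?M" by simp
    have "f \<in> space ?M \<rightarrow> space borel" by simp
    then show "sets (vimage_algebra (space ?M) f borel) \<subseteq> sets ?M"
      using measurable_sets[OF fm] by (auto simp: sets_vimage_algebra2)
  qed
  interpret FS: finite_measure_subalgebra ?M F
    by (rule finite_measure_subalgebra.intro[OF finite_measure_axioms]) (rule finite_measure_subalgebra_axioms.intro[OF subalg])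
  define A where "A = f -` B \<inter> space ?M"
  have AF: "A \<in> sets F" unfolding A_def F_def by (rule in_vimage_algebra) (rule B)
  have AM[measurable]: "A \<in> sets ?M" unfolding A_def using measurable_sets[OF fm B] .
  have Yint: "integrable ?M Y"
    by (rule integrable_const_bound[where B=1]) (auto simp: Yf)
  have fint: "integrable ?M f"
    by (rule integrable_const_bound[where B=1]) (auto simp: fz sig01 less_imp_le abs_le_iff dest: spec[of _ "z _"] intro: order.strict_implies_order[OF conjunct2[OF sig01]])
  have cal': "AE \<omega> in ?M. real_cond_exp ?M F Y \<omega> = f \<omega>"
    using cal unfolding calibrated_def F_def Y_def f_def .
  have "(\<integral>\<omega>. indicator A \<omega> * Y \<omega> \<partial>?M) = (\<integral>\<omega>. indicator A \<omega> * real_cond_exp ?M F Y \<omega> \<partial>?M)"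
    using FS.real_cond_exp_intA[OF Yint AF] unfolding set_lebesgue_integral_def by simp
  also have "\<dots> = (\<integral>\<omega>. indicator A \<omega> * f \<omega> \<partial>?M)"
  proof (rule integral_cong_AE)
    have "real_cond_exp ?M F Y \<in> borel_measurable ?M"
      using borel_measurable_cond_exp measurable_from_subalg[OF subalg] by blast
    then show "(\<lambda>\<omega>. indicator A \<omega> * real_cond_exp ?M F Y \<omega>) \<in> borel_measurable ?M" by measurable
    show "(\<lambda>\<omega>. indicator A \<omega> * f \<omega>) \<in> borel_measurable ?M" by measurable
    show "AE \<omega> in ?M. indicator A \<omega> * real_cond_exp ?M F Y \<omega> = indicator A \<omega> * f \<omega>"
      using cal' by eventually_elim simp
  qed
  finally have eqI: "(\<integral>\<omega>. indicator A \<omega> * Y \<omega> \<partial>?M) = (\<integral>\<omega>. indicator A \<omega> * f \<omega> \<partial>?M)" .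
  have nnY: "(\<integral>\<^sup>+\<omega>. ennreal (indicator A \<omega> * Y \<omega>) \<partial>?M) = ennreal (\<integral>\<omega>. indicator A \<omega> * Y \<omega> \<partial>?M)"
    using integrable_mult_indicator[OF AM Yint] by (intro nn_integral_eq_integral) (auto simp: Yf)
  have nnf: "(\<integral>\<^sup>+\<omega>. ennreal (indicator A \<omega> * f \<omega>) \<partial>?M) = ennreal (\<integral>\<omega>. indicator A \<omega> * f \<omega> \<partial>?M)"
    using integrable_mult_indicator[OF AM fint] by (intro nn_integral_eq_integral) (auto simp: fz sig01 less_imp_le)
  have indA: "\<omega> \<in> space ?M \<Longrightarrow> indicator A \<omega> = indicator B (f \<omega>)" for \<omega>
    by (simp add: A_def indicator_def)
  have "(\<integral>\<^sup>+\<omega>. ennreal (indicator B (f \<omega>) * Y \<omega>) \<partial>?M) = (\<integral>\<^sup>+\<omega>. ennreal (indicator B (f \<omega>) * f \<omega>) \<partial>?M)"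
  proof -
    have "(\<integral>\<^sup>+\<omega>. ennreal (indicator B (f \<omega>) * Y \<omega>) \<partial>?M) = (\<integral>\<^sup>+\<omega>. ennreal (indicator A \<omega> * Y \<omega>) \<partial>?M)"
      by (rule nn_integral_cong) (simp add: indA)
    also have "\<dots> = (\<integral>\<^sup>+\<omega>. ennreal (indicator A \<omega> * f \<omega>) \<partial>?M)"
      using nnY nnf eqI by simp
    also have "\<dots> = (\<integral>\<^sup>+\<omega>. ennreal (indicator B (f \<omega>) * f \<omega>) \<partial>?M)"
      by (rule nn_integral_cong) (simp add: indA)
    finally show ?thesis .
  qed
  note nnEq = this
  have HM: "(\<lambda>\<omega>. H (fst \<omega>) (snd \<omega>)) \<in> borel_measurable ?\<Omega>"
    if "\<And>y. H y \<in> borel_measurable borel" for H :: "real \<Rightarrow> ((real^'a) \<times> (real^'b)) \<Rightarrow> ennreal"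
    unfolding lborel_prod by (rule meas_count) (auto simp: that)
  have pos1: "\<And>x. phi 1 mns Sns msp Ssp x > 0" and pos2: "\<And>x. phi (-1) mns Sns msp Ssp x > 0"
    using phi_pos[OF S] by auto
  have sg0: "\<And>x. 0 \<le> sg x" and sg1: "\<And>x. 0 \<le> 1 - sg x" using sig01 less_imp_le by auto
  define I1 where "I1 = (\<integral>\<^sup>+x. ennreal (indicator B (sg (z x)) * sg (z x) * phi 1 mns Sns msp Ssp x) \<partial>lborel)"
  define I2 where "I2 = (\<integral>\<^sup>+x. ennreal (indicator B (sg (z x)) * (1 - sg (z x)) * phi 1 mns Sns msp Ssp x) \<partial>lborel)"
  define J where "J = (\<integral>\<^sup>+x. ennreal (indicator B (sg (z x)) * sg (z x) * phi (-1) mns Sns msp Ssp x) \<partial>lborel)"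
  have L: "(\<integral>\<^sup>+\<omega>. ennreal (indicator B (f \<omega>) * Y \<omega>) \<partial>?M) = ennreal eta * (I1 + I2)"
  proof -
    have "(\<integral>\<^sup>+\<omega>. ennreal (indicator B (f \<omega>) * Y \<omega>) \<partial>?M)
      = ennreal eta * (\<integral>\<^sup>+x. ennreal (indicator B (sg (z x))) * ennreal (phi 1 mns Sns msp Ssp x) \<partial>lborel)"
      using env_nn_integral[OF eta S, of "\<lambda>\<omega>. ennreal (indicator B (sg (z (snd \<omega>))) * (if fst \<omega> = 1 then 1 else 0))"]
        HM[of "\<lambda>y x. ennreal (indicator B (sg (z x)) * (if y = 1 then 1 else 0))"]
      by (simp add: fz Yf)
    also have "(\<integral>\<^sup>+x. ennreal (indicator B (sg (z x))) * ennreal (phi 1 mns Sns msp Ssp x) \<partial>lborel) = I1 + I2"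
    proof -
      have "(\<integral>\<^sup>+x. ennreal (indicator B (sg (z x))) * ennreal (phi 1 mns Sns msp Ssp x) \<partial>lborel)
        = (\<integral>\<^sup>+x. ennreal (indicator B (sg (z x)) * sg (z x) * phi 1 mns Sns msp Ssp x)
             + ennreal (indicator B (sg (z x)) * (1 - sg (z x)) * phi 1 mns Sns msp Ssp x) \<partial>lborel)"
      proof (rule nn_integral_cong)
        fix x
        define i :: real where "i = indicator B (sg (z x))"
        define s where "s = sg (z x)"
        define p where "p = phi 1 mns Sns msp Ssp x"
        have i0: "0 \<le> i" by (simp add: i_def)
        have p0: "0 \<le> p" using pos1[of x] by (simp add: p_def)
        have s0: "0 \<le> s" "0 \<le> 1 - s" using sg0 sg1 by (auto simp: s_def)
        have "ennreal (i * p) = ennreal (i * s * p + i * (1 - s) * p)"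
          by (simp add: algebra_simps)
        also have "\<dots> = ennreal (i * s * p) + ennreal (i * (1 - s) * p)"
          using i0 p0 s0 by (intro ennreal_plus) auto
        finally show "ennreal i * ennreal p = ennreal (i * s * p) + ennreal (i * (1 - s) * p)"
          using i0 p0 by (simp add: ennreal_mult)
      qed
      also have "\<dots> = I1 + I2" unfolding I1_def I2_def
        by (rule nn_integral_add) auto
      finally show ?thesis .
    qed
    finally show ?thesis .
  qed
  have R: "(\<integral>\<^sup>+\<omega>. ennreal (indicator B (f \<omega>) * f \<omega>) \<partial>?M) = ennreal eta * I1 + ennreal (1 - eta) * J"
    using env_nn_integral[OF eta S, of "\<lambda>\<omega>. ennreal (indicator B (sg (z (snd \<omega>))) * sg (z (snd \<omega>)))"]
        HM[of "\<lambda>y x. ennreal (indicator B (sg (z x)) * sg (z x))"]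
    unfolding I1_def J_def
    by (simp add: fz ennreal_mult[symmetric] pos1 pos2 less_imp_le sg0)
  have fin: "ennreal eta * I1 \<noteq> \<infinity>"
  proof -
    have "I1 \<le> (\<integral>\<^sup>+x. ennreal (phi 1 mns Sns msp Ssp x) \<partial>lborel)"
      unfolding I1_def
    proof (rule nn_integral_mono)
      fix x
      have "indicator B (sg (z x)) * sg (z x) \<le> 1"
        using sig01[of "z x"] by (simp add: indicator_def)
      then have "indicator B (sg (z x)) * sg (z x) * phi 1 mns Sns msp Ssp x \<le> phi 1 mns Sns msp Ssp x"
        using pos1[of x] by (simp add: mult_left_le_one_le sg0 mult_le_one)
      then show "ennreal (indicator B (sg (z x)) * sg (z x) * phi 1 mns Sns msp Ssp x) \<le> ennreal (phi 1 mns Sns msp Ssp x)"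
        by (rule ennreal_leI)
    qed
    then have "I1 < \<infinity>" using phi_finite[OF S, of 1] by (meson le_less_trans)
    then show ?thesis using ennreal_mult_less_top[of "ennreal eta" I1] by auto
  qed
  have "ennreal eta * I1 + ennreal eta * I2 = ennreal eta * I1 + ennreal (1 - eta) * J"
    using nnEq L R by (simp add: distrib_left)
  then have "ennreal eta * I2 = ennreal (1 - eta) * J"
    using fin ennreal_add_left_cancel by blast
  then show ?thesis unfolding I2_def J_def z_def .
qed

lemma s2_pos:
  fixes wns :: "real^'a" and wsp :: "real^'b"
  assumes "sym_pos_def Sns" "sym_pos_def Ssp" "\<not> (wns = 0 \<and> wsp = 0)"
  shows "wns \<bullet> (Sns *v wns) + wsp \<bullet> (Ssp *v wsp) > 0"
proof -
  have a: "wns \<bullet> (Sns *v wns) \<ge> 0" "wsp \<bullet> (Ssp *v wsp) \<ge> 0"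
    using sym_pos_nonneg assms(1,2) by auto
  show ?thesis
  proof (cases "wns = 0")
    case True
    then have "wsp \<noteq> 0" using assms(3) by simp
    then have "wsp \<bullet> (Ssp *v wsp) > 0" using assms(2) unfolding sym_pos_def_def by blast
    then show ?thesis using a by linarith
  next
    case False
    then have "wns \<bullet> (Sns *v wns) > 0" using assms(1) unfolding sym_pos_def_def by blast
    then show ?thesis using a by linarith
  qed
qed

lemma phi_tilt_pointwise:
  fixes mns :: "real^'a" and msp :: "real^'b" and wns :: "real^'a" and wsp :: "real^'b"
  assumes S: "sym_pos_def Sns" "sym_pos_def Ssp"
    and t: "t * (wns \<bullet> (Sns *v wns) + wsp \<bullet> (Ssp *v wsp)) = wns \<bullet> mns + wsp \<bullet> msp"
  defines "d \<equiv> (2 *\<^sub>R mns - (2 * t) *\<^sub>R (Sns *v wns), 2 *\<^sub>R msp - (2 * t) *\<^sub>R (Ssp *v wsp))"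
  shows "phi 1 mns Sns msp Ssp x = exp (2 * t * ((wns, wsp) \<bullet> x)) * phi (-1) mns Sns msp Ssp (x - d)"
    and "(wns, wsp) \<bullet> d = 0"
proof -
  obtain xns xsp where x: "x = (xns, xsp)" by (cases x)
  have g1: "gauss_density mns Sns xns = gauss_density (- mns) Sns (xns - (2 *\<^sub>R mns - (2 * t) *\<^sub>R (Sns *v wns)))
    * exp (2 * t * (wns \<bullet> xns) - 2 * t * (wns \<bullet> mns) + 2 * t^2 * (wns \<bullet> (Sns *v wns)))"
    by (rule gauss_shift[OF S(1)])
  have g2: "gauss_density msp Ssp xsp = gauss_density (- msp) Ssp (xsp - (2 *\<^sub>R msp - (2 * t) *\<^sub>R (Ssp *v wsp)))
    * exp (2 * t * (wsp \<bullet> xsp) - 2 * t * (wsp \<bullet> msp) + 2 * t^2 * (wsp \<bullet> (Ssp *v wsp)))"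
    by (rule gauss_shift[OF S(2)])
  have ex: "(2 * t * (wns \<bullet> xns) - 2 * t * (wns \<bullet> mns) + 2 * t^2 * (wns \<bullet> (Sns *v wns)))
      + (2 * t * (wsp \<bullet> xsp) - 2 * t * (wsp \<bullet> msp) + 2 * t^2 * (wsp \<bullet> (Ssp *v wsp)))
      = 2 * t * (wns \<bullet> xns + wsp \<bullet> xsp)"
  proof -
    have "2 * t^2 * (wns \<bullet> (Sns *v wns)) + 2 * t^2 * (wsp \<bullet> (Ssp *v wsp)) = 2 * t * (wns \<bullet> mns + wsp \<bullet> msp)"
    proof -
      have "2 * t^2 * (wns \<bullet> (Sns *v wns)) + 2 * t^2 * (wsp \<bullet> (Ssp *v wsp))
          = 2 * t * (t * (wns \<bullet> (Sns *v wns) + wsp \<bullet> (Ssp *v wsp)))"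
        by (simp add: power2_eq_square algebra_simps)
      then show ?thesis unfolding t .
    qed
    then show ?thesis by (simp add: algebra_simps)
  qed
  show "phi 1 mns Sns msp Ssp x = exp (2 * t * ((wns, wsp) \<bullet> x)) * phi (-1) mns Sns msp Ssp (x - d)"
    unfolding phi_def x d_def
    apply (simp only: fst_conv snd_conv scaleR_one diff_Pair scaleR_minus1_left)
    apply (subst g1, subst g2)
    apply (simp only: inner_Pair ex[symmetric] exp_add)
    apply (simp add: ac_simps)
    done
  show "(wns, wsp) \<bullet> d = 0"
    unfolding d_def using t by (simp add: inner_diff_right algebra_simps)
qed

lemma phi_tilt:
  fixes mns :: "real^'a" and msp :: "real^'b" and wns :: "real^'a" and wsp :: "real^'b"
  assumes S: "sym_pos_def Sns" "sym_pos_def Ssp"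
    and t: "t * (wns \<bullet> (Sns *v wns) + wsp \<bullet> (Ssp *v wsp)) = wns \<bullet> mns + wsp \<bullet> msp"
    and H[measurable]: "H \<in> borel_measurable borel"
  shows "(\<integral>\<^sup>+x. H ((wns, wsp) \<bullet> x) * ennreal (phi 1 mns Sns msp Ssp x) \<partial>lborel)
       = (\<integral>\<^sup>+x. H ((wns, wsp) \<bullet> x) * ennreal (exp (2 * t * ((wns, wsp) \<bullet> x)) * phi (-1) mns Sns msp Ssp x) \<partial>lborel)"
proof -
  define d where "d = (2 *\<^sub>R mns - (2 * t) *\<^sub>R (Sns *v wns), 2 *\<^sub>R msp - (2 * t) *\<^sub>R (Ssp *v wsp))"
  note pt = phi_tilt_pointwise[OF S t, folded d_def]
  define h where "h = (\<lambda>x. H ((wns, wsp) \<bullet> x) * ennreal (exp (2 * t * ((wns, wsp) \<bullet> x)) * phi (-1) mns Sns msp Ssp (x - d)))"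
  have hm: "h \<in> borel_measurable borel" unfolding h_def by measurable
  have "(\<integral>\<^sup>+x. H ((wns, wsp) \<bullet> x) * ennreal (phi 1 mns Sns msp Ssp x) \<partial>lborel) = (\<integral>\<^sup>+x. h x \<partial>lborel)"
    unfolding h_def pt(1) ..
  also have "\<dots> = (\<integral>\<^sup>+x. h (x + d) \<partial>lborel)"
    using nn_integral_translate[OF hm, of d] by simp
  also have "\<dots> = (\<integral>\<^sup>+x. H ((wns, wsp) \<bullet> x) * ennreal (exp (2 * t * ((wns, wsp) \<bullet> x)) * phi (-1) mns Sns msp Ssp x) \<partial>lborel)"
    unfolding h_def by (simp add: inner_add_right pt(2))
  finally show ?thesis .
qed

lemma inner_approx:
  fixes N :: "real measure"
  assumes sN: "sets N = sets borel" and fin: "emeasure N (space N) \<noteq> \<infinity>"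
    and E: "E \<in> sets borel" and d: "d > 0"
  shows "\<exists>C. compact C \<and> C \<subseteq> E \<and> emeasure N (E - C) < ennreal d"
proof -
  have EN: "E \<in> sets N" using E sN by simp
  have "emeasure N E \<le> emeasure N (space N)"
    by (rule emeasure_mono[OF sets.sets_into_space[OF EN] sets.top])
  then have finE: "emeasure N E \<noteq> \<infinity>" using fin by (auto simp: top_unique)
  have ne: "{K. K \<subseteq> E \<and> compact K} \<noteq> {}" by auto
  obtain C where C: "C \<in> {K. K \<subseteq> E \<and> compact K}" "emeasure N E < emeasure N C + ennreal d"
    using SUP_approx_ennreal[OF d ne inner_regular[OF sN fin E] finE] by blast
  have CN: "C \<in> sets N" using C(1) sN by (simp add: borel_compact)
  have ECN: "E - C \<in> sets N" using EN CN by auto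
  have un: "(E - C) \<union> C = E" using C(1) by auto
  have "emeasure N (E - C) + emeasure N C = emeasure N E"
    using plus_emeasure[OF ECN CN] un by auto
  moreover have "emeasure N C \<noteq> \<infinity>"
    using emeasure_mono[of C E N] C(1) EN finE by (auto simp: top_unique)
  ultimately have "emeasure N C + emeasure N (E - C) < emeasure N C + ennreal d"
    using C(2) by (simp add: add.commute)
  then have "emeasure N (E - C) < ennreal d"
    using ennreal_add_left_cancel_less by blast
  then show ?thesis using C(1) by blast
qed

lemma closed_approx2:
  fixes N :: "real measure"
  assumes sN: "sets N = sets borel" and fin: "emeasure N (space N) \<noteq> \<infinity>"
    and E: "E \<in> sets borel" and d: "d > 0"
  shows "\<exists>F1 F2. closed F1 \<and> closed F2 \<and> F1 \<subseteq> E \<and> F2 \<inter> E = {} \<and> emeasure N (UNIV - (F1 \<union> F2)) \<le> ennreal (2 * d)"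
proof -
  obtain C1 where C1: "compact C1" "C1 \<subseteq> E" "emeasure N (E - C1) < ennreal d"
    using inner_approx[OF sN fin E d] by blast
  have E': "UNIV - E \<in> sets borel" using sets.compl_sets[OF E] by simp
  obtain C2 where C2: "compact C2" "C2 \<subseteq> UNIV - E" "emeasure N ((UNIV - E) - C2) < ennreal d"
    using inner_approx[OF sN fin E' d] by blast
  have eq: "UNIV - (C1 \<union> C2) = (E - C1) \<union> ((UNIV - E) - C2)" using C1(2) C2(2) by blast
  have m1: "E - C1 \<in> sets N" unfolding sN by (intro sets.Diff E borel_compact C1(1))
  have m2: "(UNIV - E) - C2 \<in> sets N" unfolding sN by (intro sets.Diff E' borel_compact C2(1))
  have "emeasure N (UNIV - (C1 \<union> C2)) \<le> emeasure N (E - C1) + emeasure N ((UNIV - E) - C2)"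
    unfolding eq by (rule emeasure_subadditive[OF m1 m2])
  also have "\<dots> \<le> ennreal d + ennreal d" using C1(3) C2(3) by (intro add_mono less_imp_le)
  also have "\<dots> = ennreal (d + d)" using d by (intro ennreal_plus[symmetric]) auto
  also have "\<dots> = ennreal (2 * d)" by (rule arg_cong[where f=ennreal]) simp
  finally have "emeasure N (UNIV - (C1 \<union> C2)) \<le> ennreal (2 * d)" .
  moreover have "closed C1" "closed C2" using C1(1) C2(1) by (auto intro: compact_imp_closed)
  moreover have "C2 \<inter> E = {}" using C2(2) by auto
  ultimately show ?thesis using C1(2) by blast
qed

lemma lusin:
  fixes N :: "real measure" and g :: "real \<Rightarrow> real"
  assumes sN: "sets N = sets borel" and fin: "emeasure N (space N) \<noteq> \<infinity>"
    and g[measurable]: "g \<in> borel_measurable borel" and e: "e > 0"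
  shows "\<exists>K. closed K \<and> continuous_on K g \<and> emeasure N (UNIV - K) \<le> ennreal e"
proof -
  define r where "r = from_nat_into (\<rat> :: real set)"
  have rQ: "range r = \<rat>" unfolding r_def
    by (rule range_from_nat_into) (auto simp: countable_rat)
  define a where "a = (\<lambda>n::nat. e / 2 * (1/2)^n)"
  have a0: "a n > 0" for n using e by (simp add: a_def)
  have "\<forall>n. \<exists>p. closed (fst p) \<and> closed (snd p) \<and> fst p \<subseteq> g -` {..<r n} \<and> snd p \<inter> g -` {..<r n} = {}
      \<and> emeasure N (UNIV - (fst p \<union> snd p)) \<le> ennreal (2 * (a n / 4))"
  proof
    fix n
    have "g -` {..<r n} \<in> sets borel" using measurable_sets[OF g, of "{..<r n}"] by simp
    from closed_approx2[OF sN fin this, of "a n / 4"] a0[of n]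
    show "\<exists>p. closed (fst p) \<and> closed (snd p) \<and> fst p \<subseteq> g -` {..<r n} \<and> snd p \<inter> g -` {..<r n} = {}
      \<and> emeasure N (UNIV - (fst p \<union> snd p)) \<le> ennreal (2 * (a n / 4))" by auto
  qed
  then obtain PL where PL: "\<And>n. closed (fst (PL n)) \<and> closed (snd (PL n)) \<and> fst (PL n) \<subseteq> g -` {..<r n}
      \<and> snd (PL n) \<inter> g -` {..<r n} = {} \<and> emeasure N (UNIV - (fst (PL n) \<union> snd (PL n))) \<le> ennreal (2 * (a n / 4))"
    by metis
  have "\<forall>n. \<exists>p. closed (fst p) \<and> closed (snd p) \<and> fst p \<subseteq> g -` {r n<..} \<and> snd p \<inter> g -` {r n<..} = {}
      \<and> emeasure N (UNIV - (fst p \<union> snd p)) \<le> ennreal (2 * (a n / 4))"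
  proof
    fix n
    have "g -` {r n<..} \<in> sets borel" using measurable_sets[OF g, of "{r n<..}"] by simp
    from closed_approx2[OF sN fin this, of "a n / 4"] a0[of n]
    show "\<exists>p. closed (fst p) \<and> closed (snd p) \<and> fst p \<subseteq> g -` {r n<..} \<and> snd p \<inter> g -` {r n<..} = {}
      \<and> emeasure N (UNIV - (fst p \<union> snd p)) \<le> ennreal (2 * (a n / 4))" by auto
  qed
  then obtain PU where PU: "\<And>n. closed (fst (PU n)) \<and> closed (snd (PU n)) \<and> fst (PU n) \<subseteq> g -` {r n<..}
      \<and> snd (PU n) \<inter> g -` {r n<..} = {} \<and> emeasure N (UNIV - (fst (PU n) \<union> snd (PU n))) \<le> ennreal (2 * (a n / 4))"
    by metis
  define K where "K = (\<Inter>n. (fst (PL n) \<union> snd (PL n)) \<inter> (fst (PU n) \<union> snd (PU n)))"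
  have Kc: "closed K" unfolding K_def using PL PU by (intro closed_INT ballI closed_Int closed_Un) auto
  have cont: "continuous_on K g"
    unfolding continuous_on_iff
  proof (intro ballI allI impI)
    fix x \<epsilon> :: real assume xK: "x \<in> K" and \<epsilon>: "\<epsilon> > 0"
    obtain q1 where q1: "q1 \<in> \<rat>" "g x - \<epsilon> < q1" "q1 < g x" using Rats_dense_in_real[of "g x - \<epsilon>" "g x"] \<epsilon> by auto
    obtain q2 where q2: "q2 \<in> \<rat>" "g x < q2" "q2 < g x + \<epsilon>" using Rats_dense_in_real[of "g x" "g x + \<epsilon>"] \<epsilon> by auto
    obtain n1 where n1: "r n1 = q1" using q1(1) rQ by (metis imageE)
    obtain n2 where n2: "r n2 = q2" using q2(1) rQ by (metis imageE)
    have x2: "x \<notin> snd (PL n2)" using PL[of n2] q2 n2 by auto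
    have o2: "open (UNIV - snd (PL n2))" using PL[of n2] by (intro open_Diff) auto
    obtain d2 where d2: "d2 > 0" "ball x d2 \<subseteq> UNIV - snd (PL n2)"
      using o2 x2 unfolding open_contains_ball by blast
    have x1: "x \<notin> snd (PU n1)" using PU[of n1] q1 n1 by auto
    have o1: "open (UNIV - snd (PU n1))" using PU[of n1] by (intro open_Diff) auto
    obtain d1 where d1: "d1 > 0" "ball x d1 \<subseteq> UNIV - snd (PU n1)"
      using o1 x1 unfolding open_contains_ball by blast
    show "\<exists>\<delta>>0. \<forall>x'\<in>K. dist x' x < \<delta> \<longrightarrow> dist (g x') (g x) < \<epsilon>"
    proof (intro exI[of _ "min d1 d2"] conjI ballI impI)
      show "min d1 d2 > 0" using d1 d2 by simp
      fix x' assume x'K: "x' \<in> K" and dx: "dist x' x < min d1 d2"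
      have "x' \<in> ball x d2" "x' \<in> ball x d1" using dx by (auto simp: dist_commute)
      then have nL: "x' \<notin> snd (PL n2)" and nU: "x' \<notin> snd (PU n1)" using d1 d2 by auto
      have "x' \<in> fst (PL n2) \<union> snd (PL n2)" "x' \<in> fst (PU n1) \<union> snd (PU n1)"
        using x'K unfolding K_def by auto
      then have "x' \<in> fst (PL n2)" "x' \<in> fst (PU n1)" using nL nU by auto
      then have "g x' < q2" "g x' > q1" using PL[of n2] PU[of n1] n1 n2 by auto
      then show "dist (g x') (g x) < \<epsilon>" using q1 q2 by (simp add: dist_real_def abs_less_iff)
    qed
  qed
  have meas: "emeasure N (UNIV - K) \<le> ennreal e"
  proof -
    have UK: "UNIV - K = (\<Union>n. (UNIV - (fst (PL n) \<union> snd (PL n))) \<union> (UNIV - (fst (PU n) \<union> snd (PU n))))"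
      unfolding K_def by auto
    have cN: "UNIV - F \<in> sets N" if "closed F" for F
      using that by (simp add: sN borel_open open_Diff)
    have sn: "UNIV - (fst (PL n) \<union> snd (PL n)) \<in> sets N" for n
      using PL[of n] by (intro cN closed_Un) auto
    have su: "UNIV - (fst (PU n) \<union> snd (PU n)) \<in> sets N" for n
      using PU[of n] by (intro cN closed_Un) auto
    have sets: "range (\<lambda>n. (UNIV - (fst (PL n) \<union> snd (PL n))) \<union> (UNIV - (fst (PU n) \<union> snd (PU n)))) \<subseteq> sets N"
      by (rule image_subsetI) (intro sets.Un sn su)
    have "emeasure N (UNIV - K) \<le> (\<Sum>n. emeasure N ((UNIV - (fst (PL n) \<union> snd (PL n))) \<union> (UNIV - (fst (PU n) \<union> snd (PU n)))))"
      unfolding UK by (rule emeasure_subadditive_countably[OF sets])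
    also have "\<dots> \<le> (\<Sum>n. ennreal (a n))"
    proof (intro suminf_le allI)
      fix n
      note s1 = sn[of n] and s2 = su[of n]
      have "emeasure N ((UNIV - (fst (PL n) \<union> snd (PL n))) \<union> (UNIV - (fst (PU n) \<union> snd (PU n))))
          \<le> emeasure N (UNIV - (fst (PL n) \<union> snd (PL n))) + emeasure N (UNIV - (fst (PU n) \<union> snd (PU n)))"
        by (rule emeasure_subadditive[OF s1 s2])
      also have "\<dots> \<le> ennreal (2 * (a n / 4)) + ennreal (2 * (a n / 4))"
        using PL[of n] PU[of n] by (intro add_mono) auto
      also have "\<dots> = ennreal (a n)"
      proof -
        have "2 * (a n / 4) + 2 * (a n / 4) = a n" by simp
        then show ?thesis using a0[of n] by (metis ennreal_plus less_imp_le zero_le_divide_iff zero_le_mult_iff zero_le_numeral)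
      qed
      finally show "emeasure N ((UNIV - (fst (PL n) \<union> snd (PL n))) \<union> (UNIV - (fst (PU n) \<union> snd (PU n)))) \<le> ennreal (a n)" .
    qed auto
    also have "\<dots> = ennreal (\<Sum>n. a n)"
      using a0 by (intro suminf_ennreal2) (auto simp: a_def less_imp_le intro!: summable_mult summable_geometric)
    also have "(\<Sum>n. a n) = e"
    proof -
      have g: "(\<Sum>n. (1/2::real)^n) = 2" using suminf_geometric[of "1/2::real"] by simp
      have "(\<Sum>n. a n) = e/2 * (\<Sum>n. (1/2::real)^n)"
        unfolding a_def by (rule suminf_mult) (rule summable_geometric, simp)
      then show ?thesis using g by simp
    qed
    finally show ?thesis .
  qed
  show ?thesis using Kc cont meas by blast
qed

lemma GA:
  fixes N :: "real measure" and g :: "real \<Rightarrow> real"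
  assumes sN: "sets N = sets borel" and fin: "emeasure N (space N) \<noteq> \<infinity>"
    and g[measurable]: "g \<in> borel_measurable borel" and inj: "inj g"
    and E: "E \<in> sets borel"
  shows "\<exists>S'\<in>sets borel. g -` S' \<subseteq> E \<and> emeasure N (E - g -` S') = 0"
proof -
  define \<delta> where "\<delta> = (\<lambda>n::nat. inverse (real (Suc n)))"
  have \<delta>0: "\<delta> n > 0" for n by (simp add: \<delta>_def)
  have "\<forall>n. \<exists>K. closed K \<and> continuous_on K g \<and> emeasure N (UNIV - K) \<le> ennreal (\<delta> n)"
    using lusin[OF sN fin g \<delta>0] by blast
  then obtain K where K: "\<And>n. closed (K n) \<and> continuous_on (K n) g \<and> emeasure N (UNIV - K n) \<le> ennreal (\<delta> n)"
    using choice[of "\<lambda>n K. closed K \<and> continuous_on K g \<and> emeasure N (UNIV - K) \<le> ennreal (\<delta> n)"] by blast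
  have EK: "E \<inter> K n \<in> sets borel" for n
    using K[of n] by (intro sets.Int[OF E] borel_closed) blast
  have "\<forall>n. \<exists>C. compact C \<and> C \<subseteq> E \<inter> K n \<and> emeasure N (E \<inter> K n - C) < ennreal (\<delta> n)"
    using inner_approx[OF sN fin EK \<delta>0] by blast
  then obtain C where C: "\<And>n. compact (C n) \<and> C n \<subseteq> E \<inter> K n \<and> emeasure N (E \<inter> K n - C n) < ennreal (\<delta> n)"
    using choice[of "\<lambda>n C. compact C \<and> C \<subseteq> E \<inter> K n \<and> emeasure N (E \<inter> K n - C) < ennreal (\<delta> n)"] by blast
  define S' where "S' = (\<Union>n. g ` C n)"
  have gC: "compact (g ` C n)" for n
  proof -
    have "continuous_on (K n) g" "C n \<subseteq> K n" "compact (C n)" using C[of n] K[of n] by auto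
    then show ?thesis by (metis compact_continuous_image continuous_on_subset)
  qed
  have S'B: "S' \<in> sets borel"
    unfolding S'_def by (intro sets.countable_UN image_subsetI borel_closed compact_imp_closed gC)
  have pre: "g -` S' = (\<Union>n. C n)"
    unfolding S'_def by (simp add: vimage_Union inj_vimage_image_eq[OF inj])
  have sub: "g -` S' \<subseteq> E" unfolding pre using C by blast
  have CB: "(\<Union>n. C n) \<in> sets borel"
  proof (intro sets.countable_UN image_subsetI borel_compact)
    fix n show "compact (C n)" using C[of n] by blast
  qed
  have bound: "emeasure N (E - g -` S') \<le> ennreal (2 * \<delta> n)" for n
  proof -
    have cC: "compact (C n)" using C[of n] by blast
    have s1: "E \<inter> K n - C n \<in> sets N" unfolding sN by (rule sets.Diff[OF EK borel_compact[OF cC]])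
    have cK: "closed (K n)" using K[of n] by blast
    have s2: "UNIV - K n \<in> sets N" unfolding sN by (rule borel_open[OF open_Diff[OF open_UNIV cK]])
    have "E - g -` S' \<subseteq> (E \<inter> K n - C n) \<union> (UNIV - K n)" unfolding pre by blast
    then have "emeasure N (E - g -` S') \<le> emeasure N ((E \<inter> K n - C n) \<union> (UNIV - K n))"
      by (rule emeasure_mono[OF _ sets.Un[OF s1 s2]])
    also have "\<dots> \<le> emeasure N (E \<inter> K n - C n) + emeasure N (UNIV - K n)"
      by (rule emeasure_subadditive[OF s1 s2])
    also have "\<dots> \<le> ennreal (\<delta> n) + ennreal (\<delta> n)"
    proof (rule add_mono)
      show "emeasure N (E \<inter> K n - C n) \<le> ennreal (\<delta> n)" using C[of n] by (blast intro: less_imp_le)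
      show "emeasure N (UNIV - K n) \<le> ennreal (\<delta> n)" using K[of n] by blast
    qed
    also have "\<dots> = ennreal (\<delta> n + \<delta> n)" using \<delta>0[of n] by (intro ennreal_plus[symmetric]) auto
    also have "\<dots> = ennreal (2 * \<delta> n)" by (rule arg_cong[where f=ennreal]) simp
    finally show ?thesis .
  qed
  have "emeasure N (E - g -` S') \<le> 0"
  proof (rule ennreal_le_epsilon)
    fix e :: real assume "0 < e"
    then obtain m where m: "m > 0" "inverse (real m) < e / 2"
      using ex_inverse_of_nat_less[of "e/2"] by auto
    have "\<delta> (m - 1) = inverse (real m)" using m(1) by (simp add: \<delta>_def)
    then have "2 * \<delta> (m - 1) \<le> e" using m(2) by simp
    then have "ennreal (2 * \<delta> (m - 1)) \<le> ennreal e" by (rule ennreal_leI)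
    then show "emeasure N (E - g -` S') \<le> 0 + ennreal e" using bound[of "m - 1"] by simp
  qed
  then have "emeasure N (E - g -` S') = 0" by simp
  then show ?thesis using S'B sub by blast
qed

lemma ae_eq_from_G:
  fixes N :: "real measure" and g :: "real \<Rightarrow> real" and h1 h2 :: "real \<Rightarrow> ennreal"
  assumes sN: "sets N = sets borel" and fin: "emeasure N (space N) \<noteq> \<infinity>"
    and g[measurable]: "g \<in> borel_measurable borel" and inj: "inj g"
    and h1[measurable]: "h1 \<in> borel_measurable borel" and h2[measurable]: "h2 \<in> borel_measurable borel"
    and f1: "(\<integral>\<^sup>+u. h1 u \<partial>N) \<noteq> \<infinity>" and f2: "(\<integral>\<^sup>+u. h2 u \<partial>N) \<noteq> \<infinity>"
    and eq: "\<And>B. B \<in> sets borel \<Longrightarrow> (\<integral>\<^sup>+u. h1 u * indicator (g -` B) u \<partial>N) = (\<integral>\<^sup>+u. h2 u * indicator (g -` B) u \<partial>N)"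
  shows "AE u in N. h1 u = h2 u"
proof -
  have one: "AE u in N. k1 u \<le> k2 u"
    if k1[measurable]: "k1 \<in> borel_measurable borel" and k2[measurable]: "k2 \<in> borel_measurable borel"
      and fk2: "(\<integral>\<^sup>+u. k2 u \<partial>N) \<noteq> \<infinity>"
      and eqk: "\<And>B. B \<in> sets borel \<Longrightarrow> (\<integral>\<^sup>+u. k1 u * indicator (g -` B) u \<partial>N) = (\<integral>\<^sup>+u. k2 u * indicator (g -` B) u \<partial>N)"
    for k1 k2 :: "real \<Rightarrow> ennreal"
  proof -
    have k1N[measurable]: "k1 \<in> borel_measurable N" and k2N[measurable]: "k2 \<in> borel_measurable N"
      using k1 k2 by (simp_all add: measurable_cong_sets[OF sN refl])
    define E where "E = {u. k2 u < k1 u}"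
    have E: "E \<in> sets borel" unfolding E_def by measurable
    obtain S' where S': "S' \<in> sets borel" "g -` S' \<subseteq> E" "emeasure N (E - g -` S') = 0"
      using GA[OF sN fin g inj E] by blast
    define T where "T = g -` S'"
    have TB: "T \<in> sets borel" unfolding T_def using measurable_sets[OF g S'(1)] by simp
    have TN[measurable]: "T \<in> sets N" using TB sN by simp
    have "(\<integral>\<^sup>+u. k1 u * indicator T u \<partial>N) = (\<integral>\<^sup>+u. k2 u * indicator T u + (k1 u - k2 u) * indicator T u \<partial>N)"
    proof (rule nn_integral_cong)
      fix u
      show "k1 u * indicator T u = k2 u * indicator T u + (k1 u - k2 u) * indicator T u"
      proof (cases "u \<in> T")
        case True
        then have "k2 u \<le> k1 u" using S'(2) unfolding T_def E_def by auto
        then show ?thesis using True by (simp add: add_diff_inverse_ennreal)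
      qed simp
    qed
    also have "\<dots> = (\<integral>\<^sup>+u. k2 u * indicator T u \<partial>N) + (\<integral>\<^sup>+u. (k1 u - k2 u) * indicator T u \<partial>N)"
      by (rule nn_integral_add) auto
    finally have "(\<integral>\<^sup>+u. k2 u * indicator T u \<partial>N) + 0 = (\<integral>\<^sup>+u. k2 u * indicator T u \<partial>N) + (\<integral>\<^sup>+u. (k1 u - k2 u) * indicator T u \<partial>N)"
      using eqk[OF S'(1)] unfolding T_def by simp
    moreover have "(\<integral>\<^sup>+u. k2 u * indicator T u \<partial>N) \<noteq> \<infinity>"
    proof -
      have "(\<integral>\<^sup>+u. k2 u * indicator T u \<partial>N) \<le> (\<integral>\<^sup>+u. k2 u \<partial>N)"
        by (intro nn_integral_mono) (simp add: indicator_def)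
      then show ?thesis using fk2 by (auto simp: top_unique)
    qed
    ultimately have "(\<integral>\<^sup>+u. (k1 u - k2 u) * indicator T u \<partial>N) = 0"
      unfolding ennreal_add_left_cancel by simp
    then have ae0: "AE u in N. (k1 u - k2 u) * indicator T u = 0"
      by (subst (asm) nn_integral_0_iff_AE) auto
    have ETN: "E - T \<in> sets N" unfolding sN using E TB by (rule sets.Diff)
    have null: "E - T \<in> null_sets N"
      using S'(3) ETN unfolding T_def by (intro null_setsI)
    show ?thesis
      using ae0 AE_not_in[OF null]
    proof eventually_elim
      case (elim u)
      show ?case
      proof (rule ccontr)
        assume "\<not> k1 u \<le> k2 u"
        then have lt: "k2 u < k1 u" by simp
        then have "u \<in> E" by (simp add: E_def)
        then have "u \<in> T" using elim(2) by blast
        then have "k1 u - k2 u = 0" using elim(1) by simp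
        moreover have "0 < k1 u - k2 u" using lt by (rule diff_gr0_ennreal)
        ultimately show False by simp
      qed
    qed
  qed
  have a: "AE u in N. h1 u \<le> h2 u" by (rule one[OF h1 h2 f2 eq])
  have b: "AE u in N. h2 u \<le> h1 u" by (rule one[OF h2 h1 f1 eq[symmetric]])
  show ?thesis using a b by eventually_elim (rule antisym)
qed

lemma env_ae:
  fixes sg :: "real \<Rightarrow> real" and mns :: "real^'a" and msp :: "real^'b" and wns :: "real^'a" and wsp :: "real^'b"
  assumes eta: "0 \<le> eta" "eta \<le> 1" and S: "sym_pos_def Sns" "sym_pos_def Ssp"
    and sig[measurable]: "sg \<in> borel_measurable borel" and sig01: "\<And>x. 0 < sg x \<and> sg x < 1" and inj: "inj sg"
    and cal: "calibrated (env_measure eta mns Sns msp Ssp)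
           (\<lambda>(y, _). if y = 1 then 1 else 0)
           (\<lambda>(_, (xns, xsp)). sg (wns \<bullet> xns + wsp \<bullet> xsp - b))"
    and t: "t * (wns \<bullet> (Sns *v wns) + wsp \<bullet> (Ssp *v wsp)) = wns \<bullet> mns + wsp \<bullet> msp"
  shows "AE x in lborel. eta * exp (2 * t * ((wns, wsp) \<bullet> x)) * (1 - sg ((wns, wsp) \<bullet> x - b))
            = (1 - eta) * sg ((wns, wsp) \<bullet> x - b)"
proof -
  define w where "w = (wns, wsp)"
  define pm where "pm = phi (-1) mns Sns msp Ssp"
  define p1 where "p1 = phi 1 mns Sns msp Ssp"
  have pm_pos: "\<And>x. pm x > 0" and p1_pos: "\<And>x. p1 x > 0" using phi_pos[OF S] by (auto simp: pm_def p1_def)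
  have pmm[measurable]: "pm \<in> borel_measurable borel" unfolding pm_def by simp
  have p1m[measurable]: "p1 \<in> borel_measurable borel" unfolding p1_def by simp
  define N where "N = distr (density lborel (\<lambda>x. ennreal (pm x))) borel (\<lambda>x. w \<bullet> x)"
  define g where "g = (\<lambda>u. sg (u - b))"
  have gm[measurable]: "g \<in> borel_measurable borel" unfolding g_def by measurable
  have ginj: "inj g" using inj unfolding g_def inj_def by force
  have g01: "\<And>u. 0 \<le> g u" "\<And>u. 0 \<le> 1 - g u" "\<And>u. g u \<le> 1" using sig01 less_imp_le unfolding g_def by auto
  have sN: "sets N = sets borel" by (simp add: N_def)
  have intN: "(\<integral>\<^sup>+u. H u \<partial>N) = (\<integral>\<^sup>+x. ennreal (pm x) * H (w \<bullet> x) \<partial>lborel)"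
    if [measurable]: "H \<in> borel_measurable borel" for H
    unfolding N_def by (simp add: nn_integral_distr nn_integral_density)
  have fin: "emeasure N (space N) \<noteq> \<infinity>"
  proof -
    have "emeasure N (space N) = (\<integral>\<^sup>+u. 1 \<partial>N)" by simp
    also have "\<dots> = (\<integral>\<^sup>+x. ennreal (pm x) \<partial>lborel)" using intN[of "\<lambda>_. 1"] by simp
    also have "\<dots> < \<infinity>" unfolding pm_def by (rule phi_finite[OF S])
    finally show ?thesis by simp
  qed
  define h1 where "h1 = (\<lambda>u. ennreal (eta * exp (2 * t * u) * (1 - g u)))"
  define h2 where "h2 = (\<lambda>u. ennreal ((1 - eta) * g u))"
  have h1m[measurable]: "h1 \<in> borel_measurable borel" unfolding h1_def by measurable
  have h2m[measurable]: "h2 \<in> borel_measurable borel" unfolding h2_def by measurable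
  have eqB: "(\<integral>\<^sup>+u. h1 u * indicator (g -` B) u \<partial>N) = (\<integral>\<^sup>+u. h2 u * indicator (g -` B) u \<partial>N)"
    if B[measurable]: "B \<in> sets borel" for B
  proof -
    have gB[measurable]: "g -` B \<in> sets borel" using measurable_sets[OF gm B] by simp
    define H where "H = (\<lambda>u. ennreal (indicator B (g u) * (1 - g u)))"
    have Hm[measurable]: "H \<in> borel_measurable borel" unfolding H_def by measurable
    have "(\<integral>\<^sup>+u. h1 u * indicator (g -` B) u \<partial>N)
        = (\<integral>\<^sup>+x. ennreal (pm x) * (h1 (w \<bullet> x) * indicator (g -` B) (w \<bullet> x)) \<partial>lborel)"
      by (rule intN) measurable
    also have "\<dots> = (\<integral>\<^sup>+x. ennreal eta * (H (w \<bullet> x) * ennreal (exp (2 * t * (w \<bullet> x)) * pm x)) \<partial>lborel)"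
    proof (rule nn_integral_cong)
      fix x
      have i: "indicator (g -` B) (w \<bullet> x) = (indicator B (g (w \<bullet> x)) :: ennreal)" by (simp add: indicator_def)
      have e0: "0 \<le> exp (2 * t * (w \<bullet> x))" by simp
      show "ennreal (pm x) * (h1 (w \<bullet> x) * indicator (g -` B) (w \<bullet> x))
          = ennreal eta * (H (w \<bullet> x) * ennreal (exp (2 * t * (w \<bullet> x)) * pm x))"
        unfolding h1_def H_def i using eta(1) g01 pm_pos[of x] e0
        by (simp add: ennreal_mult[symmetric] indicator_def mult_nonneg_nonneg less_imp_le ac_simps)
    qed
    also have "\<dots> = ennreal eta * (\<integral>\<^sup>+x. H (w \<bullet> x) * ennreal (exp (2 * t * (w \<bullet> x)) * pm x) \<partial>lborel)"
      by (rule nn_integral_cmult) measurable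
    also have "(\<integral>\<^sup>+x. H (w \<bullet> x) * ennreal (exp (2 * t * (w \<bullet> x)) * pm x) \<partial>lborel)
        = (\<integral>\<^sup>+x. H (w \<bullet> x) * ennreal (p1 x) \<partial>lborel)"
      unfolding w_def pm_def p1_def by (rule phi_tilt[OF S t Hm, symmetric])
    also have "(\<integral>\<^sup>+x. H (w \<bullet> x) * ennreal (p1 x) \<partial>lborel)
        = (\<integral>\<^sup>+x. ennreal (indicator B (sg ((wns, wsp) \<bullet> x - b)) * (1 - sg ((wns, wsp) \<bullet> x - b)) * phi 1 mns Sns msp Ssp x) \<partial>lborel)"
    proof (rule nn_integral_cong)
      fix x
      have a: "0 \<le> indicator B (sg ((wns, wsp) \<bullet> x - b)) * (1 - sg ((wns, wsp) \<bullet> x - b))"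
        using sig01[of "(wns, wsp) \<bullet> x - b"] by (simp add: indicator_def)
      have p: "0 \<le> phi 1 mns Sns msp Ssp x" using p1_pos[of x] unfolding p1_def by simp
      show "H (w \<bullet> x) * ennreal (p1 x) = ennreal (indicator B (sg ((wns, wsp) \<bullet> x - b)) * (1 - sg ((wns, wsp) \<bullet> x - b)) * phi 1 mns Sns msp Ssp x)"
        unfolding H_def g_def w_def p1_def using ennreal_mult[OF a p] by simp
    qed
    also have "ennreal eta * \<dots> = ennreal (1 - eta) * (\<integral>\<^sup>+x. ennreal (indicator B (sg ((wns, wsp) \<bullet> x - b)) * sg ((wns, wsp) \<bullet> x - b) * phi (-1) mns Sns msp Ssp x) \<partial>lborel)"
      by (rule calib_identity[OF eta S sig sig01 cal B])
    also have "\<dots> = (\<integral>\<^sup>+x. ennreal (1 - eta) * ennreal (indicator B (sg ((wns, wsp) \<bullet> x - b)) * sg ((wns, wsp) \<bullet> x - b) * phi (-1) mns Sns msp Ssp x) \<partial>lborel)"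
      by (rule nn_integral_cmult[symmetric]) measurable
    also have "\<dots> = (\<integral>\<^sup>+x. ennreal (pm x) * (h2 (w \<bullet> x) * indicator (g -` B) (w \<bullet> x)) \<partial>lborel)"
    proof (rule nn_integral_cong)
      fix x
      have i: "indicator (g -` B) (w \<bullet> x) = (indicator B (g (w \<bullet> x)) :: ennreal)" by (simp add: indicator_def)
      show "ennreal (1 - eta) * ennreal (indicator B (sg ((wns, wsp) \<bullet> x - b)) * sg ((wns, wsp) \<bullet> x - b) * phi (-1) mns Sns msp Ssp x)
          = ennreal (pm x) * (h2 (w \<bullet> x) * indicator (g -` B) (w \<bullet> x))"
        unfolding h2_def i g_def w_def pm_def[symmetric] using eta(2) sig01 pm_pos[of x]
        by (simp add: ennreal_mult[symmetric] indicator_def less_imp_le ac_simps)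
    qed
    also have "\<dots> = (\<integral>\<^sup>+u. h2 u * indicator (g -` B) u \<partial>N)"
      by (rule intN[symmetric]) measurable
    finally show ?thesis .
  qed
  have f2: "(\<integral>\<^sup>+u. h2 u \<partial>N) \<noteq> \<infinity>"
  proof -
    have "(\<integral>\<^sup>+u. h2 u \<partial>N) \<le> (\<integral>\<^sup>+u. 1 \<partial>N)"
      unfolding h2_def using eta g01
      by (intro nn_integral_mono) (simp add: mult_le_one)
    then show ?thesis using fin by (auto simp: top_unique)
  qed
  have f1: "(\<integral>\<^sup>+u. h1 u \<partial>N) \<noteq> \<infinity>"
    using eqB[of UNIV] f2 by simp
  have ae: "AE u in N. h1 u = h2 u"
    by (rule ae_eq_from_G[OF sN fin gm ginj h1m h2m f1 f2 eqB])
  have "AE x in density lborel (\<lambda>x. ennreal (pm x)). h1 (w \<bullet> x) = h2 (w \<bullet> x)"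
    using ae unfolding N_def by (subst (asm) AE_distr_iff) auto
  then have "AE x in lborel. h1 (w \<bullet> x) = h2 (w \<bullet> x)"
    using pm_pos by (subst (asm) AE_density) auto
  then show ?thesis
  proof eventually_elim
    case (elim x)
    have "0 \<le> eta * exp (2 * t * (w \<bullet> x)) * (1 - g (w \<bullet> x))" using eta g01 by simp
    moreover have "0 \<le> (1 - eta) * g (w \<bullet> x)" using eta g01 by simp
    ultimately have "eta * exp (2 * t * (w \<bullet> x)) * (1 - g (w \<bullet> x)) = (1 - eta) * g (w \<bullet> x)"
      using elim unfolding h1_def h2_def by simp
    then show ?case unfolding g_def w_def .
  qed
qed

lemma AE_lborel_ex:
  assumes "AE x in (lborel :: 'a::euclidean_space measure). P x"
  shows "\<exists>x. P x"
proof (rule ccontr)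
  assume "\<not> (\<exists>x. P x)"
  from assms obtain N where N: "{x \<in> space lborel. \<not> P x} \<subseteq> N" "emeasure lborel N = 0" "N \<in> sets lborel"
    by (rule AE_E)
  have "UNIV \<subseteq> N" using N(1) \<open>\<not> (\<exists>x. P x)\<close> by auto
  then have "emeasure lborel (UNIV :: 'a set) \<le> emeasure lborel N"
    using N(3) by (intro emeasure_mono) auto
  then show False using N(2) by simp
qed

lemma hyper_ae:
  fixes w :: "'a::euclidean_space"
  assumes "w \<noteq> 0"
  shows "AE x in lborel. w \<bullet> x \<noteq> c"
proof -
  define S where "S = {x. w \<bullet> x = c}"
  have "negligible S" unfolding S_def using negligible_hyperplane[of w c] assms by simp
  then have "S \<in> null_sets lebesgue" by (simp add: negligible_iff_null_sets)
  moreover have SB: "S \<in> sets lborel" unfolding S_def by measurable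
  ultimately have "S \<in> null_sets lborel" using null_sets_completion_iff[of S lborel] by simp
  from AE_not_in[OF this] show ?thesis by (simp add: S_def)
qed

theorem lemmaS2:
  fixes k :: nat and eta :: real
    and mu_ns :: "real^'a" and Sig_ns :: "real^'a^'a"
    and mu :: "nat \<Rightarrow> real^'b" and Sig :: "nat \<Rightarrow> real^'b^'b"
    and sigma :: "real \<Rightarrow> real"
    and w_ns :: "real^'a" and w_sp :: "real^'b" and b :: real
  assumes "k \<ge> 1"
    and "0 \<le> eta" and "eta \<le> 1"
    and "sym_pos_def Sig_ns"
    and "\<forall>i\<in>{1..k}. sym_pos_def (Sig i)"
    and "bij_betw sigma UNIV {0<..<1}"
    and "sigma \<in> borel_measurable borel"
    and "\<forall>i\<in>{1..k}. calibrated (env_measure eta mu_ns Sig_ns (mu i) (Sig i))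
           (\<lambda>(y, _). if y = 1 then 1 else 0)
           (\<lambda>(_, (xns, xsp)). sigma (w_ns \<bullet> xns + w_sp \<bullet> xsp - b))"
  shows "(w_ns = 0 \<and> w_sp = 0) \<or>
         (\<exists>t. t \<noteq> 0 \<and> (\<forall>i\<in>{1..k}.
            (w_ns \<bullet> mu_ns + w_sp \<bullet> mu i)
              / (w_ns \<bullet> (Sig_ns *v w_ns) + w_sp \<bullet> (Sig i *v w_sp)) = t))"
proof (cases "w_ns = 0 \<and> w_sp = 0")
  case True then show ?thesis by simp
next
  case False
  note k = assms(1) and eta = assms(2,3) and Sns = assms(4) and Ssp = assms(5)
    and bij = assms(6) and sigm = assms(7) and cal = assms(8)
  have inj: "inj sigma" using bij by (simp add: bij_betw_def)
  have sig01: "\<And>x. 0 < sigma x \<and> sigma x < 1" using bij by (auto simp: bij_betw_def)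
  define w where "w = (w_ns, w_sp)"
  have w0: "w \<noteq> 0" using False by (simp add: w_def zero_prod_def)
  define S2 where "S2 = (\<lambda>i. w_ns \<bullet> (Sig_ns *v w_ns) + w_sp \<bullet> (Sig i *v w_sp))"
  define M where "M = (\<lambda>i. w_ns \<bullet> mu_ns + w_sp \<bullet> mu i)"
  define T where "T = (\<lambda>i. M i / S2 i)"
  have S2pos: "S2 i > 0" if "i \<in> {1..k}" for i
    unfolding S2_def using s2_pos[OF Sns Ssp[rule_format, OF that] False] .
  have TS: "T i * S2 i = M i" if "i \<in> {1..k}" for i
    using S2pos[OF that] by (simp add: T_def)
  define P where "P = (\<lambda>i x. eta * exp (2 * T i * (w \<bullet> x)) * (1 - sigma (w \<bullet> x - b)) = (1 - eta) * sigma (w \<bullet> x - b))"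
  have AEi: "AE x in lborel. P i x" if i: "i \<in> {1..k}" for i
    unfolding P_def w_def
    by (rule env_ae[OF eta Sns Ssp[rule_format, OF i] sigm sig01 inj cal[rule_format, OF i]])
       (use TS[OF i] in \<open>simp add: S2_def M_def\<close>)
  have i1: "1 \<in> {1..k}" using k by simp
  have eta_pos: "eta > 0" and eta_lt: "eta < 1"
  proof -
    obtain x where x: "P 1 x" using AE_lborel_ex[OF AEi[OF i1]] by blast
    have s: "0 < sigma (w \<bullet> x - b)" "sigma (w \<bullet> x - b) < 1" using sig01 by auto
    show "eta > 0"
    proof (rule ccontr)
      assume "\<not> eta > 0" then have "eta = 0" using eta by simp
      then show False using x s unfolding P_def by simp
    qed
    show "eta < 1"
    proof (rule ccontr)
      assume "\<not> eta < 1" then have "eta = 1" using eta by simp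
      then show False using x s unfolding P_def by simp
    qed
  qed
  have same: "T i = T 1" if i: "i \<in> {1..k}" for i
  proof -
    have "AE x in lborel. P 1 x \<and> P i x \<and> w \<bullet> x \<noteq> 0"
      using AEi[OF i1] AEi[OF i] hyper_ae[OF w0, of 0] by eventually_elim auto
    then obtain x where x: "P 1 x" "P i x" "w \<bullet> x \<noteq> 0" using AE_lborel_ex by blast
    define u where "u = w \<bullet> x"
    define s where "s = sigma (u - b)"
    have s1: "1 - s > 0" using sig01 by (simp add: s_def)
    have "eta * exp (2 * T 1 * u) * (1 - s) = eta * exp (2 * T i * u) * (1 - s)"
      using x(1,2) unfolding P_def u_def[symmetric] s_def[symmetric] by simp
    then have "exp (2 * T 1 * u) = exp (2 * T i * u)" using eta_pos s1 by simp
    then have "T 1 * u = T i * u" by simp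
    then show ?thesis using x(3) by (simp add: u_def)
  qed
  have T1nz: "T 1 \<noteq> 0"
  proof
    assume T0: "T 1 = 0"
    obtain x1 where x1: "P 1 x1" using AE_lborel_ex[OF AEi[OF i1]] by blast
    have "AE x in lborel. P 1 x \<and> w \<bullet> x \<noteq> w \<bullet> x1"
      using AEi[OF i1] hyper_ae[OF w0, of "w \<bullet> x1"] by eventually_elim auto
    then obtain x2 where x2: "P 1 x2" "w \<bullet> x2 \<noteq> w \<bullet> x1" using AE_lborel_ex by blast
    have e1: "sigma (w \<bullet> x1 - b) = eta" using x1 T0 unfolding P_def by (simp add: algebra_simps)
    have e2: "sigma (w \<bullet> x2 - b) = eta" using x2(1) T0 unfolding P_def by (simp add: algebra_simps)
    have "w \<bullet> x1 - b = w \<bullet> x2 - b" using inj e1 e2 by (metis injD)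
    then show False using x2(2) by simp
  qed
  show ?thesis
  proof (rule disjI2, rule exI[of _ "T 1"], intro conjI ballI)
    show "T 1 \<noteq> 0" by (rule T1nz)
    fix i assume i: "i \<in> {1..k}"
    show "(w_ns \<bullet> mu_ns + w_sp \<bullet> mu i) / (w_ns \<bullet> (Sig_ns *v w_ns) + w_sp \<bullet> (Sig i *v w_sp)) = T 1"
      using same[OF i] by (simp add: T_def M_def S2_def)
  qed
qed

end
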